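(* Let $I$, $\tilde I$, $h$, $h_A$ and the rules $\Rightarrow_t$, $\Rightarrow_e$ (for an arbitrary choice of nonempty witness sets) be as in the context. Let $\tilde\pi=\tilde s_1\to\tilde s_2\to\cdots\to\tilde s_n$ be a path in $\tilde I$ whose edges are temporal transitions $\tilde s_k\xrightarrow{\tilde\alpha_{k+1}}\tilde s_{k+1}$ or epistemic transitions $\tilde s_k\sim_a\tilde s_{k+1}$. If $st_1\subseteq h^{-1}(\tilde s_1)$ and $(\tilde\pi,st_1)\Rightarrow^*(\tilde s_n,st_n)$ with $st_n\neq\emptyset$, then there is a sequence of concrete states $s_1,\dots,s_n$ with $s_1\in st_1$, $s_n\in st_n$, $h(s_k)=\tilde s_k$ for all $k$, such that for each edge: if it is $\tilde s_k\xrightarrow{\tilde\alpha_{k+1}}\tilde s_{k+1}$ then $\tau(\alpha_{k+1},s_k)=s_{k+1}$ for some $\alpha_{k+1}$ with $h_A(\alpha_{k+1})=\tilde\alpha_{k+1}$, and if it is $\tilde s_k\sim_a\tilde s_{k+1}$ then $l_a(s_k)=l_a(s_{k+1})$ and $s_{k+1}$ is reachable in $I$.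
   Context: $I$ and $\tilde I$ are interpreted systems over the same agents (global states $S,\tilde S$ with $l_a(s)$ the local state of agent $a$; initial states $S_0,\tilde S_0$; partial transition functions $\tau,\tilde\tau$); a state of $I$ is reachable if obtained from $S_0$ by finitely many transitions. $h:S\to\tilde S$ and $h_A:ACT\to\widetilde{ACT}$ are given functions. For $st\subseteq S$ let $L_a(st)=\{l_a(s)\mid s\in st\}$ and $\Theta_\alpha(st)=\{\tau(\alpha,s)\mid s\in st,\ \tau(\alpha,s)\text{ defined}\}$. Paths in $\tilde I$ are written with first edge followed by the rest: $e\,\|\,\pi$; a path of length zero is a state. Rule TemporalCheck: $(\tilde s\xrightarrow{\tilde\alpha}\tilde s'\,\|\,\pi,st)\Rightarrow_t(\pi,\bigcup_{\alpha\in h_A^{-1}(\tilde\alpha)}\Theta_\alpha(st)\cap h^{-1}(\tilde s'))$; $\Rightarrow_t^*$ is a finite sequence of such steps. Rule EpistemicCheck: for each abstract state $\tilde s'$ fix a nonempty set $W_{\tilde s'}$ of witness paths, each a temporal path $\pi'=\tilde s'_0\xrightarrow{\tilde\alpha'_1}\cdots\xrightarrow{\tilde\alpha'_m}\tilde s'$ of $\tilde I$ with $\tilde s'_0\in\tilde S_0$; let $st'=\bigcup_{\pi'\in W_{\tilde s'}}\{X\mid (\pi',S_0\cap h^{-1}(\tilde s'_0))\Rightarrow_t^*(\tilde s',X)\}$; then $(\tilde s\sim_a\tilde s'\,\|\,\pi,st)\Rightarrow_e(\pi,\hat{st})$ where $\hat{st}=\{s\in st'\mid l_a(s)\in L_a(st)\}$.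 $\Rightarrow^*$ denotes a finite sequence of $\Rightarrow_t$ and $\Rightarrow_e$ steps. *)

theory Defs
  imports Main
begin

datatype ('ag, 'aact, 'as) edge = TEdge 'aact 'as | EEdge 'ag 'as

fun edge_target :: "('ag, 'aact, 'as) edge \<Rightarrow> 'as" where
  "edge_target (TEdge a t) = t"
| "edge_target (EEdge a t) = t"

text \<open>A path is its first state followed by a list of edges; the list of states
visited along a path.\<close>
definition path_states :: "'as \<times> ('ag, 'aact, 'as) edge list \<Rightarrow> 'as list" where
  "path_states p = fst p # map edge_target (snd p)"

fun valid_edges ::
  "('aact \<Rightarrow> 'as \<Rightarrow> 'as option) \<Rightarrow> ('ag \<Rightarrow> 'as \<Rightarrow> 'al) \<Rightarrow> 'as \<Rightarrow> ('ag, 'aact, 'as) edge list \<Rightarrow> bool" where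
  "valid_edges ttau tlo s [] = True"
| "valid_edges ttau tlo s (TEdge a t # es) = (ttau a s = Some t \<and> valid_edges ttau tlo t es)"
| "valid_edges ttau tlo s (EEdge ag t # es) = (tlo ag s = tlo ag t \<and> valid_edges ttau tlo t es)"

definition witness_path ::
  "'as set \<Rightarrow> ('aact \<Rightarrow> 'as \<Rightarrow> 'as option) \<Rightarrow> ('ag \<Rightarrow> 'as \<Rightarrow> 'al)
   \<Rightarrow> 'as \<times> ('ag, 'aact, 'as) edge list \<Rightarrow> 'as \<Rightarrow> bool" where
  "witness_path tS0 ttau tlo p s' \<longleftrightarrow>
     fst p \<in> tS0 \<and> (\<forall>e \<in> set (snd p). \<exists>a t. e = TEdge a t) \<and>
     valid_edges ttau tlo (fst p) (snd p) \<and> last (path_states p) = s'"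

definition Theta :: "('act \<Rightarrow> 's \<Rightarrow> 's option) \<Rightarrow> 'act \<Rightarrow> 's set \<Rightarrow> 's set" where
  "Theta tau \<alpha> st = {s'. \<exists>s \<in> st. tau \<alpha> s = Some s'}"

inductive tstep ::
  "('s \<Rightarrow> 'as) \<Rightarrow> ('act \<Rightarrow> 'aact) \<Rightarrow> ('act \<Rightarrow> 's \<Rightarrow> 's option)
   \<Rightarrow> ('as \<times> ('ag, 'aact, 'as) edge list) \<times> 's set
   \<Rightarrow> ('as \<times> ('ag, 'aact, 'as) edge list) \<times> 's set \<Rightarrow> bool"
  for h hA tau where
  "tstep h hA tau ((ts, TEdge ta ts' # es), st)
     ((ts', es), (\<Union>\<alpha> \<in> {\<alpha>. hA \<alpha> = ta}. Theta tau \<alpha> st) \<inter> h -` {ts'})"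

definition eset ::
  "('s \<Rightarrow> 'as) \<Rightarrow> ('act \<Rightarrow> 'aact) \<Rightarrow> ('act \<Rightarrow> 's \<Rightarrow> 's option) \<Rightarrow> 's set
   \<Rightarrow> ('as \<Rightarrow> ('as \<times> ('ag, 'aact, 'as) edge list) set) \<Rightarrow> 'as \<Rightarrow> 's set" where
  "eset h hA tau S0 W ts' =
     \<Union> {X. \<exists>p \<in> W ts'. (tstep h hA tau)\<^sup>*\<^sup>* (p, S0 \<inter> h -` {fst p}) ((ts', []), X)}"

inductive estep ::
  "('s \<Rightarrow> 'as) \<Rightarrow> ('act \<Rightarrow> 'aact) \<Rightarrow> ('act \<Rightarrow> 's \<Rightarrow> 's option) \<Rightarrow> 's set
   \<Rightarrow> ('ag \<Rightarrow> 's \<Rightarrow> 'l) \<Rightarrow> ('as \<Rightarrow> ('as \<times> ('ag, 'aact, 'as) edge list) set)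
   \<Rightarrow> ('as \<times> ('ag, 'aact, 'as) edge list) \<times> 's set
   \<Rightarrow> ('as \<times> ('ag, 'aact, 'as) edge list) \<times> 's set \<Rightarrow> bool"
  for h hA tau S0 l W where
  "W ts' \<noteq> {} \<Longrightarrow>
   estep h hA tau S0 l W ((ts, EEdge a ts' # es), st)
     ((ts', es), {s \<in> eset h hA tau S0 W ts'. l a s \<in> l a ` st})"

definition cstep where
  "cstep h hA tau S0 l W x y \<longleftrightarrow> tstep h hA tau x y \<or> estep h hA tau S0 l W x y"

inductive reachable :: "'s set \<Rightarrow> ('act \<Rightarrow> 's \<Rightarrow> 's option) \<Rightarrow> 's \<Rightarrow> bool"
  for S0 tau where
  init: "s \<in> S0 \<Longrightarrow> reachable S0 tau s"
| step: "reachable S0 tau s \<Longrightarrow> tau \<alpha> s = Some s' \<Longrightarrow> reachable S0 tau s'"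

end

theory Submission
  imports Defs
begin


lemma tstep_inv:
  assumes "(tstep h hA tau)\<^sup>*\<^sup>* x y"
    and "snd x \<subseteq> {s. reachable S0 tau s} \<inter> h -` {fst (fst x)}"
  shows "snd y \<subseteq> {s. reachable S0 tau s} \<inter> h -` {fst (fst y)}"
  using assms
proof (induction rule: rtranclp_induct)
  case base then show ?case by simp
next
  case (step y z)
  from step.hyps(2) show ?case
  proof cases
    case (1 ts ta ts' es st)
    with step.IH step.prems show ?thesis
      by (auto simp: Theta_def intro: reachable.step)
  qed
qed

lemma eset_inv:
  assumes "x \<in> eset h hA tau S0 W ts'"
  shows "h x = ts' \<and> reachable S0 tau x"
proof -
  from assms obtain X p where X: "x \<in> X" "p \<in> W ts'"
    "(tstep h hA tau)\<^sup>*\<^sup>* (p, S0 \<inter> h -` {fst p}) ((ts', []), X)"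
    unfolding eset_def by blast
  have "X \<subseteq> {s. reachable S0 tau s} \<inter> h -` {ts'}"
    using tstep_inv[OF X(3)] by (auto intro: reachable.init)
  with X(1) show ?thesis by auto
qed

lemma no_step: "(cstep h hA tau S0 l W)\<^sup>*\<^sup>* ((ts, []), st) y \<Longrightarrow> y = ((ts, []), st)"
  by (erule converse_rtranclpE) (auto simp: cstep_def elim: tstep.cases estep.cases)

lemma main:
  "(cstep h hA tau S0 l W)\<^sup>*\<^sup>* ((ts1, es), st1) ((tsn, []), stn) \<Longrightarrow>
   st1 \<subseteq> h -` {ts1} \<Longrightarrow> stn \<noteq> {} \<Longrightarrow>
   \<exists>ss :: 's list.
           length ss = length es + 1 \<and> hd ss \<in> st1 \<and> last ss \<in> stn \<and>
           (\<forall>k < length ss. h (ss ! k) = path_states (ts1, es) ! k) \<and>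
           (\<forall>k < length es.
              (\<forall>ta t. es ! k = TEdge ta t \<longrightarrow>
                 (\<exists>\<alpha>. hA \<alpha> = ta \<and> tau \<alpha> (ss ! k) = Some (ss ! Suc k))) \<and>
              (\<forall>a t. es ! k = EEdge a t \<longrightarrow>
                 l a (ss ! k) = l a (ss ! Suc k) \<and> reachable S0 tau (ss ! Suc k)))"
proof (induction es arbitrary: ts1 st1)
  case Nil
  from no_step[OF Nil.prems(1)] have "st1 = stn" "ts1 = tsn" by auto
  with Nil.prems obtain s where "s \<in> st1" by auto
  with Nil.prems(2) \<open>st1 = stn\<close> show ?case
    by (intro exI[of _ "[s]"]) (auto simp: path_states_def)
next
  case (Cons e es)
  have ne0: "((ts1, e # es), st1) \<noteq> ((tsn, []), stn)" by simp
  from Cons.prems(1) obtain y where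
    st: "cstep h hA tau S0 l W ((ts1, e # es), st1) y"
    and rest: "(cstep h hA tau S0 l W)\<^sup>*\<^sup>* y ((tsn, []), stn)"
    using converse_rtranclpE[OF Cons.prems(1)] ne0 by metis
  from st show ?case unfolding cstep_def
  proof (elim disjE)
    assume "tstep h hA tau ((ts1, e # es), st1) y"
    then obtain ta t where e: "e = TEdge ta t" and
      y: "y = ((t, es), (\<Union>\<alpha> \<in> {\<alpha>. hA \<alpha> = ta}. Theta tau \<alpha> st1) \<inter> h -` {t})"
      by (cases rule: tstep.cases) auto
    have sub: "(\<Union>\<alpha> \<in> {\<alpha>. hA \<alpha> = ta}. Theta tau \<alpha> st1) \<inter> h -` {t} \<subseteq> h -` {t}" by blast
    from Cons.IH[OF rest[unfolded y] sub Cons.prems(3)] obtain ss where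
      ss: "length ss = length es + 1" "hd ss \<in> (\<Union>\<alpha> \<in> {\<alpha>. hA \<alpha> = ta}. Theta tau \<alpha> st1) \<inter> h -` {t}"
        "last ss \<in> stn"
        "\<forall>k < length ss. h (ss ! k) = path_states (t, es) ! k"
        "\<forall>k < length es.
              (\<forall>ta t. es ! k = TEdge ta t \<longrightarrow>
                 (\<exists>\<alpha>. hA \<alpha> = ta \<and> tau \<alpha> (ss ! k) = Some (ss ! Suc k))) \<and>
              (\<forall>a t. es ! k = EEdge a t \<longrightarrow>
                 l a (ss ! k) = l a (ss ! Suc k) \<and> reachable S0 tau (ss ! Suc k))"
      by blast
    from ss(2) obtain \<alpha> s where a: "hA \<alpha> = ta" "s \<in> st1" "tau \<alpha> s = Some (hd ss)"
      by (auto simp: Theta_def)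
    have ne: "ss \<noteq> []" using ss(1) by auto
    have hd0: "ss ! 0 = hd ss" using ne by (simp add: hd_conv_nth)
    show ?thesis
    proof (intro exI[of _ "s # ss"] conjI allI impI)
      show "length (s # ss) = length (e # es) + 1" using ss by simp
      show "hd (s # ss) \<in> st1" using a by simp
      show "last (s # ss) \<in> stn" using ss ne by simp
    next
      fix k assume k: "k < length (s # ss)"
      show "h ((s # ss) ! k) = path_states (ts1, e # es) ! k"
      proof (cases k)
        case 0 then show ?thesis using a Cons.prems(2) by (auto simp: path_states_def)
      next
        case (Suc j) then show ?thesis using ss(4) k e by (auto simp: path_states_def)
      qed
    next
      fix k ta' t' assume k: "k < length (e # es)" and ek: "(e # es) ! k = TEdge ta' t'"
      show "\<exists>\<alpha>. hA \<alpha> = ta' \<and> tau \<alpha> ((s # ss) ! k) = Some ((s # ss) ! Suc k)"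
      proof (cases k)
        case 0 then show ?thesis using a ek e hd0 by auto
      next
        case (Suc j) then show ?thesis using ss(5) k ek by auto
      qed
    next
      fix k a' t' assume k: "k < length (e # es)" and ek: "(e # es) ! k = EEdge a' t'"
      show "l a' ((s # ss) ! k) = l a' ((s # ss) ! Suc k)"
      proof (cases k)
        case 0 then show ?thesis using ek e by auto
      next
        case (Suc j) then show ?thesis using ss(5) k ek by auto
      qed
    next
      fix k a' t' assume k: "k < length (e # es)" and ek: "(e # es) ! k = EEdge a' t'"
      show "reachable S0 tau ((s # ss) ! Suc k)"
      proof (cases k)
        case 0 then show ?thesis using ek e by auto
      next
        case (Suc j) then show ?thesis using ss(5) k ek by auto
      qed
    qed
  next
    assume "estep h hA tau S0 l W ((ts1, e # es), st1) y"
    then obtain ag t where e: "e = EEdge ag t" and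
      y: "y = ((t, es), {s \<in> eset h hA tau S0 W t. l ag s \<in> l ag ` st1})"
      by (cases rule: estep.cases) auto
    have sub: "{s \<in> eset h hA tau S0 W t. l ag s \<in> l ag ` st1} \<subseteq> h -` {t}"
      using eset_inv by fastforce
    from Cons.IH[OF rest[unfolded y] sub Cons.prems(3)] obtain ss where
      ss: "length ss = length es + 1" "hd ss \<in> {s \<in> eset h hA tau S0 W t. l ag s \<in> l ag ` st1}"
        "last ss \<in> stn"
        "\<forall>k < length ss. h (ss ! k) = path_states (t, es) ! k"
        "\<forall>k < length es.
              (\<forall>ta t. es ! k = TEdge ta t \<longrightarrow>
                 (\<exists>\<alpha>. hA \<alpha> = ta \<and> tau \<alpha> (ss ! k) = Some (ss ! Suc k))) \<and>
              (\<forall>a t. es ! k = EEdge a t \<longrightarrow>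
                 l a (ss ! k) = l a (ss ! Suc k) \<and> reachable S0 tau (ss ! Suc k))"
      by blast
    from ss(2) obtain s where a: "s \<in> st1" "l ag s = l ag (hd ss)"
      "reachable S0 tau (hd ss)"
      using eset_inv by force
    have ne: "ss \<noteq> []" using ss(1) by auto
    have hd0: "ss ! 0 = hd ss" using ne by (simp add: hd_conv_nth)
    show ?thesis
    proof (intro exI[of _ "s # ss"] conjI allI impI)
      show "length (s # ss) = length (e # es) + 1" using ss by simp
      show "hd (s # ss) \<in> st1" using a by simp
      show "last (s # ss) \<in> stn" using ss ne by simp
    next
      fix k assume k: "k < length (s # ss)"
      show "h ((s # ss) ! k) = path_states (ts1, e # es) ! k"
      proof (cases k)
        case 0 then show ?thesis using a Cons.prems(2) by (auto simp: path_states_def)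
      next
        case (Suc j) then show ?thesis using ss(4) k e by (auto simp: path_states_def)
      qed
    next
      fix k ta' t' assume k: "k < length (e # es)" and ek: "(e # es) ! k = TEdge ta' t'"
      show "\<exists>\<alpha>. hA \<alpha> = ta' \<and> tau \<alpha> ((s # ss) ! k) = Some ((s # ss) ! Suc k)"
      proof (cases k)
        case 0 then show ?thesis using ek e by auto
      next
        case (Suc j) then show ?thesis using ss(5) k ek by auto
      qed
    next
      fix k a' t' assume k: "k < length (e # es)" and ek: "(e # es) ! k = EEdge a' t'"
      show "l a' ((s # ss) ! k) = l a' ((s # ss) ! Suc k)"
      proof (cases k)
        case 0 then show ?thesis using a ek e hd0 by auto
      next
        case (Suc j) then show ?thesis using ss(5) k ek by auto
      qed
    next
      fix k a' t' assume k: "k < length (e # es)" and ek: "(e # es) ! k = EEdge a' t'"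
      show "reachable S0 tau ((s # ss) ! Suc k)"
      proof (cases k)
        case 0 then show ?thesis using a ek e hd0 by auto
      next
        case (Suc j) then show ?thesis using ss(5) k ek by auto
      qed
    qed
  qed
qed

theorem proposition4:
  fixes S0 :: "'s set" and tau :: "'act \<Rightarrow> 's \<Rightarrow> 's option" and l :: "'ag \<Rightarrow> 's \<Rightarrow> 'l"
    and tS0 :: "'as set" and ttau :: "'aact \<Rightarrow> 'as \<Rightarrow> 'as option" and tlo :: "'ag \<Rightarrow> 'as \<Rightarrow> 'al"
    and h :: "'s \<Rightarrow> 'as" and hA :: "'act \<Rightarrow> 'aact"
    and W :: "'as \<Rightarrow> ('as \<times> ('ag, 'aact, 'as) edge list) set"
    and ts1 tsn :: 'as and es :: "('ag, 'aact, 'as) edge list"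
    and st1 stn :: "'s set"
  assumes W_paths: "\<And>ts' p. p \<in> W ts' \<Longrightarrow> witness_path tS0 ttau tlo p ts'"
    and path: "valid_edges ttau tlo ts1 es"
    and st1: "st1 \<subseteq> h -` {ts1}"
    and run: "(cstep h hA tau S0 l W)\<^sup>*\<^sup>* ((ts1, es), st1) ((tsn, []), stn)"
    and nonempty: "stn \<noteq> {}"
  shows "\<exists>ss :: 's list.
           length ss = length es + 1 \<and> hd ss \<in> st1 \<and> last ss \<in> stn \<and>
           (\<forall>k < length ss. h (ss ! k) = path_states (ts1, es) ! k) \<and>
           (\<forall>k < length es.
              (\<forall>ta t. es ! k = TEdge ta t \<longrightarrow>
                 (\<exists>\<alpha>. hA \<alpha> = ta \<and> tau \<alpha> (ss ! k) = Some (ss ! Suc k))) \<and>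
              (\<forall>a t. es ! k = EEdge a t \<longrightarrow>
                 l a (ss ! k) = l a (ss ! Suc k) \<and> reachable S0 tau (ss ! Suc k)))"
  using main[OF run st1 nonempty] .

end
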